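(* Let $n_0, L\in\mathbb{N}_+$, $n_1,\dots,n_L\in\mathbb{N}_+$, and let $h_l\in\mathrm{RL}(n_{l-1},n_l)$ for $l=1,\dots,L$, with $\mathbf{h}=(h_1,\dots,h_L)$. Let $\gamma\in\Gamma$. Then $$|\mathcal{S}_{\mathbf{h}}|\le\big\|B^{(\gamma)}_{n_L}M_{n_{L-1},n_L}\cdots B^{(\gamma)}_{n_1}M_{n_0,n_1}e_{n_0+1}\big\|_1,$$ where $e_{n_0+1}\in\mathbb{R}^{n_0+1}$ is the standard unit vector with $1$ in position $n_0+1$ and $0$ elsewhere.
   Context: $\mathbb{N}=\{0,1,2,\dots\}$, $\mathbb{N}_+=\mathbb{N}\setminus\{0\}$, $\sigma(x)=\max(0,x)$. For $n,n'\in\mathbb{N}_+$, $\mathrm{RL}(n,n')$ is the set of maps $h:\mathbb{R}^n\to\mathbb{R}^{n'}$, $h(x)_i=\sigma(\langle x,w_i\rangle+b_i)$, for some $W\in\mathbb{R}^{n'\times n}$ with rows $w_i$ and $b\in\mathbb{R}^{n'}$. Signature: $S_h(x)_i=1$ iff $\langle x,w_i\rangle+b_i>0$, else $0$; $\mathcal{S}_h=\{S_h(x):x\in\mathbb{R}^n\}$. Convention: $\mathrm{RL}(0,n')$ consists of constant maps $\{0\}\to\mathbb{R}^{n'}$ and for such $h$, $\mathcal{H}_{n'}(\mathcal{S}_h)={\rm e}_0$. Multi signature: $S_{\mathbf{h}}(x)=(S_{h_1}(x),S_{h_2}(h_1(x)),\dots,S_{h_L}(h_{L-1}\circ\dots\circ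 h_1(x)))$, $\mathcal{S}_{\mathbf{h}}=\{S_{\mathbf{h}}(x):x\in\mathbb{R}^{n_0}\}$; $|s|=\sum_i s_i$. $V$: sequences $(v_j)_{j\in\mathbb{N}}$ in $\mathbb{N}$ with finite sum; ${\rm e}_i$ has $({\rm e}_i)_j=\delta_{ij}$. $v\preceq w$ iff $\sum_{j\ge J}v_j\le\sum_{j\ge J}w_j$ for all $J$. For a finite family, $\max_i(v^{(i)})_J=\max_i\sum_{j\ge J}v^{(i)}_j-\max_i\sum_{j\ge J+1}v^{(i)}_j$. $\mathcal{H}_{n'}(\mathcal{S})=(|\{s\in\mathcal{S}:|s|=j\}|)_j$ for $\mathcal{S}\subseteq\{0,1\}^{n'}$. $\Gamma$ is the set of families $(\gamma_{n,n'})_{n'\in\mathbb{N}_+,n\in\{0,\dots,n'\}}$ in $V$ with (i) $\max\{\mathcal{H}_{n'}(\mathcal{S}_h):h\in\mathrm{RL}(n,n')\}\preceq\gamma_{n,n'}$ and (ii) $n\le\tilde n\le n'\Rightarrow\gamma_{n,n'}\preceq\gamma_{\tilde n,n'}$. Clipping: $\mathrm{cl}_{i^*}(v)_i=v_i$ ($i<i^*$), $\sum_{j\ge i^*}v_j$ ($i=i^*$), $0$ ($i>i^*$). Bound matrix: for $\gamma\in\Gamma$, $n'\in\mathbb{N}_+$, $B^{(\gamma)}_{n'}\in\mathbb{N}^{(n'+1)\times(n'+1)}$ with $(B^{(\gamma)}_{n'})_{i,j}=(\mathrm{cl}_{j-1}(\gamma_{j-1,n'}))_{i-1}$ for $i,j\in\{1,\dots,n'+1\}$.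 Connector matrix: for $n,n'\in\mathbb{N}$, $M_{n,n'}\in\mathbb{R}^{(n'+1)\times(n+1)}$ with $(M_{n,n'})_{i,j}=\delta_{i,\min(j,n'+1)}$. *)

theory Defs
  imports "Jordan_Normal_Form.Matrix"
begin

definition relu :: "real \<Rightarrow> real" where
  "relu x = max 0 x"

definition RL :: "nat \<Rightarrow> nat \<Rightarrow> (real mat \<times> real vec) set" where
  "RL n n' = {(W, b). W \<in> carrier_mat n' n \<and> b \<in> carrier_vec n'}"

definition relu_layer :: "real mat \<times> real vec \<Rightarrow> real vec \<Rightarrow> real vec" where
  "relu_layer h x = map_vec relu (fst h *\<^sub>v x + snd h)"

definition sig :: "real mat \<times> real vec \<Rightarrow> real vec \<Rightarrow> nat vec" where
  "sig h x = vec (dim_row (fst h)) (\<lambda>i. if (fst h *\<^sub>v x + snd h) $ i > 0 then 1 else 0)"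

definition sigs :: "real mat \<times> real vec \<Rightarrow> nat \<Rightarrow> nat vec set" where
  "sigs h n = sig h ` carrier_vec n"

fun multi_sig :: "(real mat \<times> real vec) list \<Rightarrow> real vec \<Rightarrow> nat vec list" where
  "multi_sig [] x = []"
| "multi_sig (h # hs) x = sig h x # multi_sig hs (relu_layer h x)"

definition multi_sigs :: "(real mat \<times> real vec) list \<Rightarrow> nat \<Rightarrow> nat vec list set" where
  "multi_sigs hs n0 = multi_sig hs ` carrier_vec n0"

definition weight :: "nat vec \<Rightarrow> nat" where
  "weight s = (\<Sum>i<dim_vec s. s $ i)"

definition hist :: "nat vec set \<Rightarrow> nat \<Rightarrow> nat" where
  "hist S = (\<lambda>j. card {s \<in> S. weight s = j})"

definition in_V :: "(nat \<Rightarrow> nat) \<Rightarrow> bool" where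
  "in_V v \<longleftrightarrow> finite {j. v j \<noteq> 0}"

definition e_seq :: "nat \<Rightarrow> nat \<Rightarrow> nat" where
  "e_seq i = (\<lambda>j. if j = i then 1 else 0)"

definition tail :: "(nat \<Rightarrow> nat) \<Rightarrow> nat \<Rightarrow> nat" where
  "tail v J = (\<Sum>j | J \<le> j \<and> v j \<noteq> 0. v j)"

definition preceq :: "(nat \<Rightarrow> nat) \<Rightarrow> (nat \<Rightarrow> nat) \<Rightarrow> bool" where
  "preceq v w \<longleftrightarrow> (\<forall>J. tail v J \<le> tail w J)"

text \<open>Maximum of a finite family in V.\<close>
definition vmax :: "(nat \<Rightarrow> nat) set \<Rightarrow> nat \<Rightarrow> nat" where
  "vmax F = (\<lambda>J. Max ((\<lambda>v. tail v J) ` F) - Max ((\<lambda>v. tail v (Suc J)) ` F))"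

definition maxHist :: "nat \<Rightarrow> nat \<Rightarrow> nat \<Rightarrow> nat" where
  "maxHist n n' = (if n = 0 then e_seq 0 else vmax ((\<lambda>h. hist (sigs h n)) ` RL n n'))"

definition in_Gamma :: "(nat \<Rightarrow> nat \<Rightarrow> nat \<Rightarrow> nat) \<Rightarrow> bool" where
  "in_Gamma \<gamma> \<longleftrightarrow>
     (\<forall>n' n. 1 \<le> n' \<and> n \<le> n' \<longrightarrow> in_V (\<gamma> n n') \<and> preceq (maxHist n n') (\<gamma> n n')) \<and>
     (\<forall>n' n m. 1 \<le> n' \<and> n \<le> m \<and> m \<le> n' \<longrightarrow> preceq (\<gamma> n n') (\<gamma> m n'))"

definition clip :: "nat \<Rightarrow> (nat \<Rightarrow> nat) \<Rightarrow> nat \<Rightarrow> nat" where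
  "clip istar v = (\<lambda>i. if i < istar then v i else if i = istar then tail v istar else 0)"

definition bound_mat :: "(nat \<Rightarrow> nat \<Rightarrow> nat \<Rightarrow> nat) \<Rightarrow> nat \<Rightarrow> real mat" where
  "bound_mat \<gamma> n' = mat (n' + 1) (n' + 1) (\<lambda>(i, j). real (clip j (\<gamma> j n') i))"

definition conn_mat :: "nat \<Rightarrow> nat \<Rightarrow> real mat" where
  "conn_mat n n' = mat (n' + 1) (n + 1) (\<lambda>(i, j). if i = min j n' then 1 else 0)"

fun chain_mat :: "(nat \<Rightarrow> nat \<Rightarrow> nat \<Rightarrow> nat) \<Rightarrow> (nat \<Rightarrow> nat) \<Rightarrow> nat \<Rightarrow> real mat" where
  "chain_mat \<gamma> ns 0 = 1\<^sub>m (ns 0 + 1)"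
| "chain_mat \<gamma> ns (Suc l) = bound_mat \<gamma> (ns (Suc l)) * conn_mat (ns l) (ns (Suc l)) * chain_mat \<gamma> ns l"

definition norm1 :: "real vec \<Rightarrow> real" where
  "norm1 v = (\<Sum>i<dim_vec v. \<bar>v $ i\<bar>)"

end

theory Submission
  imports Defs
begin


definition Bin :: "nat \<Rightarrow> nat vec set" where
  "Bin n = {v. v \<in> carrier_vec n \<and> (\<forall>i<n. v $ i \<le> 1)}"

lemma finite_Bin: "finite (Bin n)"
proof -
  have "Bin n \<subseteq> vec_of_list ` {xs. set xs \<subseteq> {0..1} \<and> length xs = n}"
  proof
    fix v assume v: "v \<in> Bin n"
    have eq: "v = vec_of_list (list_of_vec v)" by (simp add: vec_list)
    have len: "length (list_of_vec v) = n" using v unfolding Bin_def by simp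
    have st: "set (list_of_vec v) \<subseteq> {0..1::nat}"
    proof
      fix a assume "a \<in> set (list_of_vec v)"
      then obtain i where "i < length (list_of_vec v)" "a = list_of_vec v ! i"
        by (auto simp: in_set_conv_nth)
      moreover have "dim_vec v = n" and le: "\<forall>i<n. v $ i \<le> 1" using v unfolding Bin_def carrier_vec_def by auto
      ultimately have "i < n" "a = v $ i" by (simp_all add: list_of_vec_index)
      then show "a \<in> {0..1}" using le by simp
    qed
    have mem: "list_of_vec v \<in> {xs. set xs \<subseteq> {0..1} \<and> length xs = n}" using len st by simp
    show "v \<in> vec_of_list ` {xs. set xs \<subseteq> {0..1} \<and> length xs = n}"
      using image_eqI[where f=vec_of_list, OF eq mem] .
  qed
  moreover have "finite {xs. set xs \<subseteq> {0..(1::nat)} \<and> length xs = n}"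
    by (rule finite_lists_length_eq) simp
  then have "finite (vec_of_list ` {xs. set xs \<subseteq> {0..(1::nat)} \<and> length xs = n})"
    by (rule finite_imageI)
  ultimately show ?thesis by (rule finite_subset)
qed

lemma sig_Bin: "sig h x \<in> Bin (dim_row (fst h))"
  unfolding sig_def Bin_def by auto

lemma weight_le: "v \<in> Bin n \<Longrightarrow> weight v \<le> n"
proof -
  assume v: "v \<in> Bin n"
  have "dim_vec v = n" using v unfolding Bin_def carrier_vec_def by simp
  then have "weight v = (\<Sum>i<n. v $ i)" unfolding weight_def by simp
  also have "\<dots> \<le> (\<Sum>i<n. 1)"
  proof (rule sum_mono)
    fix i assume "i \<in> {..<n}"
    then show "v $ i \<le> 1" using v unfolding Bin_def by simp
  qed
  finally show ?thesis by simp
qed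

lemma tail_eq:
  assumes "\<forall>j\<ge>N. v j = 0"
  shows "tail v J = sum v {J..<N}"
proof -
  have "tail v J = sum v {j. J \<le> j \<and> v j \<noteq> 0}" by (simp add: tail_def)
  also have "\<dots> = sum v {J..<N}"
  proof (rule sum.mono_neutral_left)
    show "{j. J \<le> j \<and> v j \<noteq> 0} \<subseteq> {J..<N}"
    proof
      fix j assume j: "j \<in> {j. J \<le> j \<and> v j \<noteq> 0}"
      have "j < N"
      proof (rule ccontr)
        assume "\<not> j < N"
        then show False using assms j by simp
      qed
      then show "j \<in> {J..<N}" using j by simp
    qed
  qed auto
  finally show ?thesis .
qed

lemma tail_split:
  assumes "in_V v" "J \<le> k"
  shows "tail v J = sum v {J..<k} + tail v k"
proof -
  have fin: "finite {j. v j \<noteq> 0}" using assms(1) by (simp add: in_V_def)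
  obtain M where M: "\<forall>j\<in>{j. v j \<noteq> 0}. j < M"
    using fin finite_nat_set_iff_bounded by blast
  define N where "N = max k M"
  have N: "\<forall>j\<ge>N. v j = 0" "k \<le> N"
  proof -
    show "\<forall>j\<ge>N. v j = 0"
    proof (intro allI impI)
      fix j assume "N \<le> j"
      then have "\<not> j < M" unfolding N_def by simp
      then show "v j = 0" using M by blast
    qed
    show "k \<le> N" unfolding N_def by simp
  qed
  have "tail v J = sum v {J..<N}" using tail_eq N by blast
  also have "\<dots> = sum v {J..<k} + sum v {k..<N}"
    using assms(2) N(2) by (metis sum.atLeastLessThan_concat)
  also have "sum v {k..<N} = tail v k" using tail_eq N by metis
  finally show ?thesis .
qed

lemma tail_hist:
  assumes "finite S"
  shows "tail (hist S) J = card {s\<in>S. J \<le> weight s}"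
proof -
  let ?A = "{j. J \<le> j \<and> hist S j \<noteq> 0}"
  have sub: "?A \<subseteq> weight ` S"
  proof
    fix j assume "j \<in> ?A"
    then have "card {s \<in> S. weight s = j} \<noteq> 0" by (simp add: hist_def)
    then have "{s \<in> S. weight s = j} \<noteq> {}" by (metis card.empty)
    then obtain s where "s \<in> S" "weight s = j" by blast
    then show "j \<in> weight ` S" by blast
  qed
  have finA: "finite ?A" by (rule finite_subset[OF sub]) (use assms in simp)
  have "tail (hist S) J = (\<Sum>j\<in>?A. card {s \<in> S. weight s = j})"
    by (simp add: tail_def hist_def)
  also have "\<dots> = card (\<Union>j\<in>?A. {s \<in> S. weight s = j})"
    by (rule card_UN_disjoint[symmetric]) (use finA assms in auto)
  also have "(\<Union>j\<in>?A. {s \<in> S. weight s = j}) = {s\<in>S. J \<le> weight s}"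
  proof
    show "(\<Union>j\<in>?A. {s \<in> S. weight s = j}) \<subseteq> {s\<in>S. J \<le> weight s}" by blast
    show "{s\<in>S. J \<le> weight s} \<subseteq> (\<Union>j\<in>?A. {s \<in> S. weight s = j})"
    proof
      fix s assume s: "s \<in> {s\<in>S. J \<le> weight s}"
      have "card {s' \<in> S. weight s' = weight s} \<noteq> 0"
        using assms s by (subst card_0_eq) auto
      then have "weight s \<in> ?A" using s by (simp add: hist_def)
      then show "s \<in> (\<Union>j\<in>?A. {s \<in> S. weight s = j})" using s by blast
    qed
  qed
  finally show ?thesis .
qed



lemma abel:
  fixes g :: "nat \<Rightarrow> real" and f :: "'a \<Rightarrow> nat" and \<phi> :: "nat \<Rightarrow> nat" and v :: "nat \<Rightarrow> real"
  assumes X: "finite X" and fN: "\<forall>x\<in>X. f x \<le> N" and phiN: "\<forall>j<M. \<phi> j \<le> N"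
    and gmono: "\<forall>k<N. g k \<le> g (Suc k)" and g0: "0 \<le> g 0"
    and cnt: "\<forall>K\<le>N. real (card {x\<in>X. K \<le> f x}) \<le> (\<Sum>j\<in>{j\<in>{..<M}. K \<le> \<phi> j}. v j)"
  shows "(\<Sum>x\<in>X. g (f x)) \<le> (\<Sum>j<M. v j * g (\<phi> j))"
proof -
  define \<delta> where "\<delta> = (\<lambda>K. if K = 0 then g 0 else g K - g (K - 1))"
  have gsum: "g k = (\<Sum>K\<le>k. \<delta> K)" for k
    by (induction k) (auto simp: \<delta>_def)
  have gk: "g k = (\<Sum>K\<le>N. if K \<le> k then \<delta> K else 0)" if "k \<le> N" for k
  proof -
    have "(\<Sum>K\<le>N. if K \<le> k then \<delta> K else 0) = sum \<delta> {K\<in>{..N}. K \<le> k}"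
      by (rule sum.inter_filter[symmetric]) simp
    also have "{K\<in>{..N}. K \<le> k} = {..k}" using that by auto
    finally show ?thesis using gsum by simp
  qed
  have dpos: "0 \<le> \<delta> K" if "K \<le> N" for K
  proof (cases K)
    case 0 then show ?thesis using g0 by (simp add: \<delta>_def)
  next
    case (Suc K')
    then have "K' < N" using that by simp
    then show ?thesis using gmono Suc by (simp add: \<delta>_def)
  qed
  have "(\<Sum>x\<in>X. g (f x)) = (\<Sum>x\<in>X. \<Sum>K\<le>N. if K \<le> f x then \<delta> K else 0)"
    by (rule sum.cong) (use fN gk in auto)
  also have "\<dots> = (\<Sum>K\<le>N. \<Sum>x\<in>X. if K \<le> f x then \<delta> K else 0)"
    by (rule sum.swap)
  also have "\<dots> = (\<Sum>K\<le>N. \<delta> K * real (card {x\<in>X. K \<le> f x}))"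
  proof (rule sum.cong)
    fix K assume "K \<in> {..N}"
    have "(\<Sum>x\<in>X. if K \<le> f x then \<delta> K else 0) = (\<Sum>x\<in>{x\<in>X. K \<le> f x}. \<delta> K)"
      by (rule sum.inter_filter[symmetric]) (rule X)
    also have "\<dots> = \<delta> K * real (card {x\<in>X. K \<le> f x})" by simp
    finally show "(\<Sum>x\<in>X. if K \<le> f x then \<delta> K else 0) = \<delta> K * real (card {x\<in>X. K \<le> f x})" .
  qed simp
  also have "\<dots> \<le> (\<Sum>K\<le>N. \<delta> K * (\<Sum>j\<in>{j\<in>{..<M}. K \<le> \<phi> j}. v j))"
  proof (rule sum_mono)
    fix K assume "K \<in> {..N}"
    then show "\<delta> K * real (card {x\<in>X. K \<le> f x}) \<le> \<delta> K * (\<Sum>j\<in>{j\<in>{..<M}. K \<le> \<phi> j}. v j)"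
      using cnt dpos by (intro mult_left_mono) auto
  qed
  also have "\<dots> = (\<Sum>K\<le>N. \<Sum>j<M. if K \<le> \<phi> j then \<delta> K * v j else 0)"
  proof (rule sum.cong)
    fix K assume "K \<in> {..N}"
    have "\<delta> K * (\<Sum>j\<in>{j\<in>{..<M}. K \<le> \<phi> j}. v j) = (\<Sum>j\<in>{j\<in>{..<M}. K \<le> \<phi> j}. \<delta> K * v j)"
      by (simp add: sum_distrib_left)
    also have "\<dots> = (\<Sum>j<M. if K \<le> \<phi> j then \<delta> K * v j else 0)"
      by (rule sum.inter_filter) simp
    finally show "\<delta> K * (\<Sum>j\<in>{j\<in>{..<M}. K \<le> \<phi> j}. v j) = (\<Sum>j<M. if K \<le> \<phi> j then \<delta> K * v j else 0)" .
  qed simp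
  also have "\<dots> = (\<Sum>j<M. \<Sum>K\<le>N. if K \<le> \<phi> j then \<delta> K * v j else 0)"
    by (rule sum.swap)
  also have "\<dots> = (\<Sum>j<M. v j * g (\<phi> j))"
  proof (rule sum.cong)
    fix j assume j: "j \<in> {..<M}"
    have "(\<Sum>K\<le>N. if K \<le> \<phi> j then \<delta> K * v j else 0) = (\<Sum>K\<le>N. (if K \<le> \<phi> j then \<delta> K else 0) * v j)"
      by (rule sum.cong) auto
    also have "\<dots> = (\<Sum>K\<le>N. if K \<le> \<phi> j then \<delta> K else 0) * v j"
      by (simp add: sum_distrib_right)
    also have "\<dots> = g (\<phi> j) * v j" using gk[of "\<phi> j"] phiN j by simp
    finally show "(\<Sum>K\<le>N. if K \<le> \<phi> j then \<delta> K * v j else 0) = v j * g (\<phi> j)" by simp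
  qed simp
  finally show ?thesis .
qed

lemma telescope_nat:
  fixes f :: "nat \<Rightarrow> nat"
  assumes anti: "\<And>i j. i \<le> j \<Longrightarrow> f j \<le> f i" and "J \<le> N"
  shows "(\<Sum>j\<in>{J..<N}. f j - f (Suc j)) = f J - f N"
  using assms(2)
proof (induction N)
  case 0 then show ?case by simp
next
  case (Suc N)
  show ?case
  proof (cases "J = Suc N")
    case True then show ?thesis by simp
  next
    case False
    then have JN: "J \<le> N" using Suc.prems by simp
    have "(\<Sum>j\<in>{J..<Suc N}. f j - f (Suc j)) = (\<Sum>j\<in>{J..<N}. f j - f (Suc j)) + (f N - f (Suc N))"
      using JN by simp
    also have "\<dots> = (f J - f N) + (f N - f (Suc N))" using Suc.IH JN by simp
    also have "\<dots> = f J - f (Suc N)" using anti[OF JN] anti[of N "Suc N"] by simp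
    finally show ?thesis .
  qed
qed



lemma RL_dim: "h \<in> RL n n' \<Longrightarrow> dim_row (fst h) = n'"
  unfolding RL_def by auto

lemma sigs_Bin: assumes "h \<in> RL n n'" shows "sigs h n \<subseteq> Bin n'"
proof
  fix s assume "s \<in> sigs h n"
  then obtain x where "s = sig h x" unfolding sigs_def by blast
  then show "s \<in> Bin n'" using sig_Bin[of h x] RL_dim[OF assms] by simp
qed

lemma finite_sigs: "h \<in> RL n n' \<Longrightarrow> finite (sigs h n)"
  by (rule finite_subset[OF sigs_Bin finite_Bin])

lemma RL_nonempty: "(0\<^sub>m n' n, 0\<^sub>v n') \<in> RL n n'"
  unfolding RL_def by simp

lemma maxHist_ge:
  assumes "1 \<le> n" "h \<in> RL n n'"
  shows "tail (hist (sigs h n)) J \<le> tail (maxHist n n') J"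
proof -
  define F where "F = (\<lambda>h. hist (sigs h n)) ` RL n n'"
  define Mx where "Mx = (\<lambda>J. Max ((\<lambda>v. tail v J) ` F))"
  have tailF: "tail (hist (sigs h' n)) J' = card {s\<in>sigs h' n. J' \<le> weight s}"
    if "h' \<in> RL n n'" for h' J'
    using tail_hist[OF finite_sigs[OF that]] by blast
  have bnd: "tail v J' \<le> card (Bin n')" if vF: "v \<in> F" for v J'
  proof -
    obtain h' where h': "v = hist (sigs h' n)" "h' \<in> RL n n'" using vF unfolding F_def by blast
    have "tail v J' = card {s\<in>sigs h' n. J' \<le> weight s}" using tailF h' by simp
    also have "\<dots> \<le> card (Bin n')"
      by (rule card_mono[OF finite_Bin]) (use sigs_Bin[OF h'(2)] in blast)
    finally show ?thesis .
  qed
  have anti1: "tail v J2 \<le> tail v J1" if "v \<in> F" "J1 \<le> J2" for v J1 J2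
  proof -
    obtain h' where h': "v = hist (sigs h' n)" "h' \<in> RL n n'" using \<open>v \<in> F\<close> unfolding F_def by blast
    have "card {s\<in>sigs h' n. J2 \<le> weight s} \<le> card {s\<in>sigs h' n. J1 \<le> weight s}"
      by (rule card_mono) (use finite_sigs[OF h'(2)] that(2) in auto)
    then show ?thesis using tailF h' by simp
  qed
  have zeroF: "tail v J' = 0" if "v \<in> F" "n' < J'" for v J'
  proof -
    obtain h' where h': "v = hist (sigs h' n)" "h' \<in> RL n n'" using \<open>v \<in> F\<close> unfolding F_def by blast
    have E: "{s\<in>sigs h' n. J' \<le> weight s} = {}"
    proof -
      have "weight s \<le> n'" if "s \<in> sigs h' n" for s
        using weight_le sigs_Bin[OF h'(2)] that by blast
      then show ?thesis using \<open>n' < J'\<close> by fastforce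
    qed
    have "tail v J' = card {s\<in>sigs h' n. J' \<le> weight s}" using tailF[OF h'(2)] h'(1) by simp
    also have "\<dots> = 0" unfolding E by simp
    finally show ?thesis .
  qed
  have finI: "finite ((\<lambda>v. tail v J') ` F)" for J'
    by (rule finite_subset[of _ "{..card (Bin n')}"]) (use bnd in auto)
  have neF: "F \<noteq> {}" unfolding F_def using RL_nonempty by blast
  have ge: "tail v J' \<le> Mx J'" if "v \<in> F" for v J'
    unfolding Mx_def using finI that by (intro Max_ge) auto
  have inI: "Mx J' \<in> (\<lambda>v. tail v J') ` F" for J'
    unfolding Mx_def using finI neF by (intro Max_in) auto
  have antiM: "Mx j \<le> Mx i" if "i \<le> j" for i j
  proof -
    obtain v where v: "v \<in> F" "Mx j = tail v j" using inI[of j] by blast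
    then show ?thesis using anti1[OF v(1) that] ge[OF v(1), of i] by simp
  qed
  have zeroM: "Mx J' = 0" if "n' < J'" for J'
    using inI[of J'] zeroF that by force
  have vm: "maxHist n n' = (\<lambda>j. Mx j - Mx (Suc j))"
    using assms(1) by (simp add: maxHist_def vmax_def Mx_def F_def)
  have vz: "\<forall>j\<ge>Suc n'. maxHist n n' j = 0" using vm zeroM by simp
  have "tail (maxHist n n') J = Mx J"
  proof (cases "J \<le> Suc n'")
    case True
    have "tail (maxHist n n') J = (\<Sum>j\<in>{J..<Suc n'}. Mx j - Mx (Suc j))"
      using tail_eq[OF vz] vm by simp
    also have "\<dots> = Mx J - Mx (Suc n')" by (rule telescope_nat[OF antiM True])
    finally show ?thesis using zeroM by simp
  next
    case False
    then show ?thesis using tail_eq[OF vz, of J] zeroM by simp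
  qed
  moreover have "hist (sigs h n) \<in> F" using assms(2) unfolding F_def by blast
  ultimately show ?thesis using ge by simp
qed

lemma carrier_vec_0D: "v \<in> carrier_vec 0 \<Longrightarrow> v = 0\<^sub>v 0"
  by (intro eq_vecI) auto

lemma carrier_vec_0: "carrier_vec 0 = {0\<^sub>v 0 :: 'a::zero vec}"
  by (auto dest: carrier_vec_0D)

lemma tail_e0: "tail (e_seq 0) 0 = 1"
proof -
  have "\<forall>j\<ge>1. e_seq 0 j = 0" by (simp add: e_seq_def)
  then have "tail (e_seq 0) 0 = sum (e_seq 0) {0..<1}" by (rule tail_eq)
  then show ?thesis by (simp add: e_seq_def)
qed

lemma gamma_count:
  assumes G: "in_Gamma \<gamma>" and n': "1 \<le> n'" and m: "m \<le> n'" and h: "h \<in> RL m n'"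
    and J: "J \<le> m" and T: "T \<subseteq> sigs h m"
  shows "card {s\<in>T. J \<le> weight s} \<le> tail (\<gamma> m n') J"
proof -
  have pre: "preceq (maxHist m n') (\<gamma> m n')" using G n' m unfolding in_Gamma_def by blast
  have finT: "finite T" by (rule finite_subset[OF T finite_sigs[OF h]])
  have le1: "card {s\<in>T. J \<le> weight s} \<le> card {s\<in>sigs h m. J \<le> weight s}"
    by (rule card_mono) (use finite_sigs[OF h] T in auto)
  show ?thesis
  proof (cases "m = 0")
    case True
    then have J0: "J = 0" using J by simp
    have "sigs h m = sig h ` {0\<^sub>v 0}" using True by (simp add: sigs_def carrier_vec_0)
    then have c1: "card (sigs h m) = 1" by simp
    have "card {s\<in>sigs h m. J \<le> weight s} \<le> card (sigs h m)"
      by (rule card_mono) (use finite_sigs[OF h] in auto)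
    then have "card {s\<in>sigs h m. J \<le> weight s} \<le> 1" using c1 by simp
    moreover have "tail (e_seq 0) 0 \<le> tail (\<gamma> 0 n') 0" using pre True
      by (simp add: preceq_def maxHist_def)
    ultimately show ?thesis using le1 tail_e0 True J0 by simp
  next
    case False
    then have "1 \<le> m" by simp
    have "card {s\<in>sigs h m. J \<le> weight s} = tail (hist (sigs h m)) J"
      using tail_hist[OF finite_sigs[OF h]] by simp
    also have "\<dots> \<le> tail (maxHist m n') J" by (rule maxHist_ge[OF \<open>1 \<le> m\<close> h])
    also have "\<dots> \<le> tail (\<gamma> m n') J" using pre by (simp add: preceq_def)
    finally show ?thesis using le1 by simp
  qed
qed

definition gcol :: "(nat \<Rightarrow> nat \<Rightarrow> nat \<Rightarrow> nat) \<Rightarrow> nat \<Rightarrow> nat \<Rightarrow> nat \<Rightarrow> real" where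
  "gcol \<gamma> n' J k = (\<Sum>i\<in>{J..<n'+1}. real (clip k (\<gamma> k n') i))"

lemma gcol_eq:
  assumes V: "in_V (\<gamma> k n')" and k: "k \<le> n'"
  shows "gcol \<gamma> n' J k = (if J \<le> k then real (tail (\<gamma> k n') J) else 0)"
proof -
  let ?v = "\<gamma> k n'"
  have "gcol \<gamma> n' J k = real (\<Sum>i\<in>{J..<n'+1}. clip k ?v i)"
    unfolding gcol_def by simp
  also have "(\<Sum>i\<in>{J..<n'+1}. clip k ?v i) = (if J \<le> k then tail ?v J else 0)"
  proof (cases "J \<le> k")
    case True
    have split: "{J..<n'+1} = {J..<k} \<union> ({k} \<union> {Suc k..<n'+1})" using True k by auto
    have "(\<Sum>i\<in>{J..<n'+1}. clip k ?v i)
        = (\<Sum>i\<in>{J..<k}. clip k ?v i) + (clip k ?v k + (\<Sum>i\<in>{Suc k..<n'+1}. clip k ?v i))"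
      unfolding split by (subst sum.union_disjoint; simp)+
    also have "(\<Sum>i\<in>{J..<k}. clip k ?v i) = sum ?v {J..<k}"
      by (rule sum.cong) (auto simp: clip_def)
    also have "(\<Sum>i\<in>{Suc k..<n'+1}. clip k ?v i) = 0"
      by (rule sum.neutral) (auto simp: clip_def)
    also have "clip k ?v k = tail ?v k" by (simp add: clip_def)
    finally show ?thesis using tail_split[OF V True] True by simp
  next
    case False
    have "(\<Sum>i\<in>{J..<n'+1}. clip k ?v i) = 0"
      by (rule sum.neutral) (use False in \<open>auto simp: clip_def\<close>)
    then show ?thesis using False by simp
  qed
  finally show ?thesis by simp
qed

lemma gcol_nonneg: "0 \<le> gcol \<gamma> n' J k"
  unfolding gcol_def by (intro sum_nonneg) simp

lemma gcol_mono:
  assumes G: "in_Gamma \<gamma>" and n': "1 \<le> n'" and k: "k < n'"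
  shows "gcol \<gamma> n' J k \<le> gcol \<gamma> n' J (Suc k)"
proof -
  have V1: "in_V (\<gamma> k n')" and V2: "in_V (\<gamma> (Suc k) n')"
    using G n' k unfolding in_Gamma_def by auto
  have pre: "preceq (\<gamma> k n') (\<gamma> (Suc k) n')" using G n' k unfolding in_Gamma_def by auto
  have e1: "gcol \<gamma> n' J k = (if J \<le> k then real (tail (\<gamma> k n') J) else 0)"
    by (rule gcol_eq[where \<gamma>=\<gamma> and k=k and n'=n', OF V1]) (use k in simp)
  have e2: "gcol \<gamma> n' J (Suc k) = (if J \<le> Suc k then real (tail (\<gamma> (Suc k) n') J) else 0)"
    by (rule gcol_eq[where \<gamma>=\<gamma> and k="Suc k" and n'=n', OF V2]) (use k in simp)
  have "tail (\<gamma> k n') J \<le> tail (\<gamma> (Suc k) n') J" using pre by (simp add: preceq_def)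
  then show ?thesis unfolding e1 e2 by auto
qed



lemma bound_mat_carrier: "bound_mat \<gamma> n' \<in> carrier_mat (n'+1) (n'+1)"
  by (simp add: bound_mat_def)

lemma conn_mat_carrier: "conn_mat n n' \<in> carrier_mat (n'+1) (n+1)"
  by (simp add: conn_mat_def)

lemma chain_carrier: "chain_mat \<gamma> ns l \<in> carrier_mat (ns l + 1) (ns 0 + 1)"
proof (induction l)
  case 0 then show ?case by simp
next
  case (Suc l)
  have "bound_mat \<gamma> (ns (Suc l)) * conn_mat (ns l) (ns (Suc l)) \<in> carrier_mat (ns (Suc l) + 1) (ns l + 1)"
    using bound_mat_carrier conn_mat_carrier by (rule mult_carrier_mat)
  then show ?case using Suc.IH by (simp del: chain_mat.simps add: chain_mat.simps(2) mult_carrier_mat)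
qed

lemma chain_step:
  assumes e: "e \<in> carrier_vec (ns 0 + 1)"
  shows "chain_mat \<gamma> ns (Suc l) *\<^sub>v e
    = bound_mat \<gamma> (ns (Suc l)) *\<^sub>v (conn_mat (ns l) (ns (Suc l)) *\<^sub>v (chain_mat \<gamma> ns l *\<^sub>v e))"
proof -
  have B: "bound_mat \<gamma> (ns (Suc l)) \<in> carrier_mat (ns (Suc l) + 1) (ns (Suc l) + 1)" by (rule bound_mat_carrier)
  have M: "conn_mat (ns l) (ns (Suc l)) \<in> carrier_mat (ns (Suc l) + 1) (ns l + 1)" by (rule conn_mat_carrier)
  have C: "chain_mat \<gamma> ns l \<in> carrier_mat (ns l + 1) (ns 0 + 1)" by (rule chain_carrier)
  have BM: "bound_mat \<gamma> (ns (Suc l)) * conn_mat (ns l) (ns (Suc l)) \<in> carrier_mat (ns (Suc l) + 1) (ns l + 1)"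
    using B M by (rule mult_carrier_mat)
  have "chain_mat \<gamma> ns (Suc l) *\<^sub>v e
      = (bound_mat \<gamma> (ns (Suc l)) * conn_mat (ns l) (ns (Suc l))) *\<^sub>v (chain_mat \<gamma> ns l *\<^sub>v e)"
    unfolding chain_mat.simps(2) by (rule assoc_mult_mat_vec[OF BM C e])
  also have "\<dots> = bound_mat \<gamma> (ns (Suc l)) *\<^sub>v (conn_mat (ns l) (ns (Suc l)) *\<^sub>v (chain_mat \<gamma> ns l *\<^sub>v e))"
    by (rule assoc_mult_mat_vec[OF B M]) (use C e in simp)
  finally show ?thesis .
qed

lemma mat_vec_sum:
  assumes "A \<in> carrier_mat r k" "z \<in> carrier_vec k" "i < r"
  shows "(A *\<^sub>v z) $ i = (\<Sum>j<k. A $$ (i,j) * z $ j)"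
proof -
  have "(A *\<^sub>v z) $ i = row A i \<bullet> z" using assms by simp
  also have "\<dots> = (\<Sum>j\<in>{0..<k}. row A i $ j * z $ j)" using assms unfolding scalar_prod_def by simp
  also have "\<dots> = (\<Sum>j<k. A $$ (i,j) * z $ j)"
    by (rule sum.cong) (use assms in auto)
  finally show ?thesis .
qed

lemma conn_apply:
  assumes v: "v \<in> carrier_vec (n+1)" and k: "k < n'+1"
  shows "(conn_mat n n' *\<^sub>v v) $ k = (\<Sum>j<n+1. if k = min j n' then v $ j else 0)"
proof -
  have "(conn_mat n n' *\<^sub>v v) $ k = (\<Sum>j<n+1. conn_mat n n' $$ (k,j) * v $ j)"
    by (rule mat_vec_sum[OF conn_mat_carrier v k])
  also have "\<dots> = (\<Sum>j<n+1. if k = min j n' then v $ j else 0)"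
    by (rule sum.cong[OF refl]) (use k in \<open>simp add: conn_mat_def\<close>)
  finally show ?thesis .
qed

lemma bound_apply:
  assumes w: "w \<in> carrier_vec (n'+1)" and i: "i < n'+1"
  shows "(bound_mat \<gamma> n' *\<^sub>v w) $ i = (\<Sum>k<n'+1. real (clip k (\<gamma> k n') i) * w $ k)"
  using mat_vec_sum[OF bound_mat_carrier w i] i by (simp add: bound_mat_def)

lemma rtail_step:
  assumes v: "v \<in> carrier_vec (n+1)"
  shows "(\<Sum>i\<in>{J..<n'+1}. (bound_mat \<gamma> n' *\<^sub>v (conn_mat n n' *\<^sub>v v)) $ i)
       = (\<Sum>j<n+1. v $ j * gcol \<gamma> n' J (min j n'))"
proof -
  let ?B = "\<lambda>i k. real (clip k (\<gamma> k n') i)"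
  have w: "conn_mat n n' *\<^sub>v v \<in> carrier_vec (n'+1)"
    using conn_mat_carrier v by (rule mult_mat_vec_carrier)
  have "(\<Sum>i\<in>{J..<n'+1}. (bound_mat \<gamma> n' *\<^sub>v (conn_mat n n' *\<^sub>v v)) $ i)
      = (\<Sum>i\<in>{J..<n'+1}. \<Sum>k<n'+1. ?B i k * (\<Sum>j<n+1. if k = min j n' then v $ j else 0))"
    by (rule sum.cong) (use bound_apply[OF w] conn_apply[OF v] in simp_all)
  also have "\<dots> = (\<Sum>i\<in>{J..<n'+1}. \<Sum>k<n'+1. \<Sum>j<n+1. if k = min j n' then ?B i k * v $ j else 0)"
  proof (rule sum.cong[OF refl], rule sum.cong[OF refl])
    fix i k
    show "?B i k * (\<Sum>j<n+1. if k = min j n' then v $ j else 0)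
        = (\<Sum>j<n+1. if k = min j n' then ?B i k * v $ j else 0)"
      unfolding sum_distrib_left by (rule sum.cong) simp_all
  qed
  also have "\<dots> = (\<Sum>i\<in>{J..<n'+1}. \<Sum>j<n+1. \<Sum>k<n'+1. if k = min j n' then ?B i k * v $ j else 0)"
    by (rule sum.cong[OF refl], rule sum.swap)
  also have "\<dots> = (\<Sum>i\<in>{J..<n'+1}. \<Sum>j<n+1. ?B i (min j n') * v $ j)"
  proof (rule sum.cong[OF refl], rule sum.cong[OF refl])
    fix i j
    have "min j n' \<in> {..<n'+1}" by simp
    then show "(\<Sum>k<n'+1. if k = min j n' then ?B i k * v $ j else 0) = ?B i (min j n') * v $ j"
      by (subst sum.delta) simp_all
  qed
  also have "\<dots> = (\<Sum>j<n+1. \<Sum>i\<in>{J..<n'+1}. ?B i (min j n') * v $ j)"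
    by (rule sum.swap)
  also have "\<dots> = (\<Sum>j<n+1. v $ j * gcol \<gamma> n' J (min j n'))"
    unfolding gcol_def sum_distrib_left by (rule sum.cong[OF refl], rule sum.cong[OF refl]) (simp add: mult.commute)
  finally show ?thesis .
qed



definition Fwd :: "(real mat \<times> real vec) list \<Rightarrow> real vec \<Rightarrow> real vec" where
  "Fwd xs x = foldl (\<lambda>y h. relu_layer h y) x xs"

lemma multi_sig_snoc: "multi_sig (xs @ [h]) x = multi_sig xs x @ [sig h (Fwd xs x)]"
  by (induction xs arbitrary: x) (simp_all add: Fwd_def)

lemma Fwd_snoc: "Fwd (xs @ [h]) x = relu_layer h (Fwd xs x)"
  by (simp add: Fwd_def)

lemma Fwd_nil: "Fwd [] x = x"
  by (simp add: Fwd_def)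

definition dd :: "nat \<Rightarrow> nat vec list \<Rightarrow> nat" where
  "dd n0 p = foldl (\<lambda>a s. min a (weight s)) n0 p"

lemma dd_snoc: "dd n0 (p @ [s]) = min (dd n0 p) (weight s)"
  by (simp add: dd_def)

lemma dd_nil: "dd n0 [] = n0"
  by (simp add: dd_def)

lemma relu_layer_carrier:
  assumes "W \<in> carrier_mat n' n" "b \<in> carrier_vec n'" "y \<in> carrier_vec n"
  shows "relu_layer (W, b) y \<in> carrier_vec n'"
  using assms unfolding relu_layer_def by simp

lemma sig_affine:
  assumes W: "W \<in> carrier_mat n' n" and b: "b \<in> carrier_vec n'" and U: "U \<in> carrier_mat n d"
    and c: "c \<in> carrier_vec n" and z: "z \<in> carrier_vec d"
  shows "W *\<^sub>v (U *\<^sub>v z + c) + b = (W * U) *\<^sub>v z + (W *\<^sub>v c + b)"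
proof -
  have Uz: "U *\<^sub>v z \<in> carrier_vec n" using U z by simp
  have "W *\<^sub>v (U *\<^sub>v z + c) = W *\<^sub>v (U *\<^sub>v z) + W *\<^sub>v c"
    by (rule mult_add_distrib_mat_vec[OF W Uz c])
  also have "W *\<^sub>v (U *\<^sub>v z) = (W * U) *\<^sub>v z"
    by (rule assoc_mult_mat_vec[symmetric, OF W U z])
  finally have "W *\<^sub>v (U *\<^sub>v z + c) + b = ((W * U) *\<^sub>v z + W *\<^sub>v c) + b" by simp
  also have "\<dots> = (W * U) *\<^sub>v z + (W *\<^sub>v c + b)"
    by (rule assoc_add_vec) (use W U z c b in auto)
  finally show ?thesis .
qed

lemma sig_eq_vec:
  assumes "dim_row A = dim_row A'" "A *\<^sub>v x + a = A' *\<^sub>v x' + a'"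
  shows "sig (A, a) x = sig (A', a') x'"
  using assms unfolding sig_def by simp

lemma layer_sigs:
  assumes W: "W \<in> carrier_mat n' n" and b: "b \<in> carrier_vec n'" and U: "U \<in> carrier_mat n d"
    and c: "c \<in> carrier_vec n" and R: "\<forall>y\<in>Y. \<exists>z\<in>carrier_vec d. y = U *\<^sub>v z + c"
  shows "\<exists>h2 \<in> RL (min d n') n'. sig (W, b) ` Y \<subseteq> sigs h2 (min d n')"
proof (cases "d \<le> n'")
  case True
  let ?h2 = "(W * U, W *\<^sub>v c + b)"
  have "?h2 \<in> RL (min d n') n'" using True W U c b unfolding RL_def by auto
  moreover have "sig (W, b) ` Y \<subseteq> sigs ?h2 (min d n')"
  proof
    fix s assume "s \<in> sig (W, b) ` Y"
    then obtain y where y: "y \<in> Y" "s = sig (W, b) y" by blast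
    then obtain z where z: "z \<in> carrier_vec d" "y = U *\<^sub>v z + c" using R by blast
    have "s = sig ?h2 z"
      unfolding y(2) z(2) by (rule sig_eq_vec) (use W U sig_affine[OF W b U c z(1)] in simp_all)
    then show "s \<in> sigs ?h2 (min d n')" unfolding sigs_def using z(1) True by simp
  qed
  ultimately show ?thesis by blast
next
  case False
  let ?h2 = "(1\<^sub>m n' :: real mat, W *\<^sub>v c + b)"
  have "?h2 \<in> RL (min d n') n'" using False W U c b unfolding RL_def by auto
  moreover have "sig (W, b) ` Y \<subseteq> sigs ?h2 (min d n')"
  proof
    fix s assume "s \<in> sig (W, b) ` Y"
    then obtain y where y: "y \<in> Y" "s = sig (W, b) y" by blast
    then obtain z where z: "z \<in> carrier_vec d" "y = U *\<^sub>v z + c" using R by blast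
    have WUz: "(W * U) *\<^sub>v z \<in> carrier_vec n'" using W U z(1) by simp
    have "s = sig ?h2 ((W * U) *\<^sub>v z)"
      unfolding y(2) z(2) by (rule sig_eq_vec) (use W U WUz sig_affine[OF W b U c z(1)] in simp_all)
    then show "s \<in> sigs ?h2 (min d n')" unfolding sigs_def using WUz False by simp
  qed
  ultimately show ?thesis by blast
qed

lemma relu_sig:
  assumes "dim_row (fst h) = n'" "dim_vec (snd h) = n'" "i < n'"
  shows "relu_layer h y $ i = (if sig h y $ i = 1 then (fst h *\<^sub>v y + snd h) $ i else 0)"
proof -
  have i: "i < dim_vec (fst h *\<^sub>v y + snd h)" using assms by simp
  have "relu_layer h y $ i = relu ((fst h *\<^sub>v y + snd h) $ i)"
    unfolding relu_layer_def using i by (rule index_map_vec)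
  moreover have "sig h y $ i = (if (fst h *\<^sub>v y + snd h) $ i > 0 then 1 else 0)"
    unfolding sig_def using assms by simp
  ultimately show ?thesis by (simp add: relu_def)
qed

lemma sum_idx:
  assumes "distinct xs"
  shows "(\<Sum>j<length xs. if xs ! j = i then a else 0) = (if i \<in> set xs then a else (0::real))"
proof (cases "i \<in> set xs")
  case True
  then obtain j0 where j0: "j0 < length xs" "xs ! j0 = i" by (auto simp: in_set_conv_nth)
  have "(\<Sum>j<length xs. if xs ! j = i then a else 0) = (\<Sum>j<length xs. if j = j0 then a else 0)"
  proof (rule sum.cong[OF refl])
    fix j assume "j \<in> {..<length xs}"
    then have "xs ! j = i \<longleftrightarrow> j = j0" using j0 assms nth_eq_iff_index_eq by fastforce
    then show "(if xs ! j = i then a else 0) = (if j = j0 then a else 0)" by simp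
  qed
  also have "\<dots> = a" using j0(1) by simp
  finally show ?thesis using True by simp
next
  case False
  have "(\<Sum>j<length xs. if xs ! j = i then a else 0) = 0"
    by (rule sum.neutral) (use False nth_mem in fastforce)
  then show ?thesis using False by simp
qed

lemma length_idx:
  assumes s: "s \<in> Bin n'"
  shows "length (filter (\<lambda>i. s $ i = 1) [0..<n']) = weight s"
proof -
  have ds: "dim_vec s = n'" using s unfolding Bin_def by simp
  have "length (filter (\<lambda>i. s $ i = 1) [0..<n']) = card {i. i < length [0..<n'] \<and> s $ ([0..<n'] ! i) = 1}"
    by (rule length_filter_conv_card)
  also have "\<dots> = card {i. i < n' \<and> s $ i = 1}"
    by (rule arg_cong[where f=card]) auto
  also have "\<dots> = card {i\<in>{..<n'}. s $ i = 1}" by (rule arg_cong[where f=card]) auto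
  also have "\<dots> = (\<Sum>i\<in>{i\<in>{..<n'}. s $ i = 1}. (1::nat))" by simp
  also have "\<dots> = (\<Sum>i<n'. if s $ i = 1 then 1 else 0)" by (rule sum.inter_filter) simp
  also have "\<dots> = (\<Sum>i<n'. s $ i)"
  proof (rule sum.cong[OF refl])
    fix i assume "i \<in> {..<n'}"
    then have "s $ i \<le> 1" using s unfolding Bin_def by simp
    then show "(if s $ i = 1 then 1 else 0) = s $ i" by auto
  qed
  also have "\<dots> = weight s" unfolding weight_def ds by simp
  finally show ?thesis .
qed

lemma relu_param:
  assumes W: "W \<in> carrier_mat n' n" and b: "b \<in> carrier_vec n'" and U: "U \<in> carrier_mat n d"
    and c: "c \<in> carrier_vec n" and s: "s \<in> Bin n'"
  shows "\<exists>U' c'. U' \<in> carrier_mat n' (min d (weight s)) \<and> c' \<in> carrier_vec n' \<and>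
    (\<forall>z\<in>carrier_vec d. sig (W, b) (U *\<^sub>v z + c) = s \<longrightarrow>
       (\<exists>z'\<in>carrier_vec (min d (weight s)). relu_layer (W, b) (U *\<^sub>v z + c) = U' *\<^sub>v z' + c'))"
proof (cases "d \<le> weight s")
  case True
  define U' where "U' = mat n' d (\<lambda>(i,j). if s $ i = 1 then (W * U) $$ (i,j) else 0)"
  define c' where "c' = vec n' (\<lambda>i. if s $ i = 1 then (W *\<^sub>v c + b) $ i else 0)"
  have U': "U' \<in> carrier_mat n' (min d (weight s))" using True unfolding U'_def by simp
  have c': "c' \<in> carrier_vec n'" unfolding c'_def by simp
  have "relu_layer (W, b) (U *\<^sub>v z + c) = U' *\<^sub>v z + c'"
    if z: "z \<in> carrier_vec d" and sz: "sig (W, b) (U *\<^sub>v z + c) = s" for z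
  proof (rule eq_vecI)
    have WU: "W * U \<in> carrier_mat n' d" using W U by simp
    show "dim_vec (relu_layer (W, b) (U *\<^sub>v z + c)) = dim_vec (U' *\<^sub>v z + c')"
      using W b U' c' unfolding relu_layer_def by simp
    fix i assume "i < dim_vec (U' *\<^sub>v z + c')"
    then have i: "i < n'" using U' c' by simp
    have "relu_layer (W, b) (U *\<^sub>v z + c) $ i
        = (if s $ i = 1 then (W *\<^sub>v (U *\<^sub>v z + c) + b) $ i else 0)"
      using relu_sig[of "(W, b)" n' i] W b i sz by simp
    also have "(W *\<^sub>v (U *\<^sub>v z + c) + b) $ i = ((W * U) *\<^sub>v z) $ i + (W *\<^sub>v c + b) $ i"
      using sig_affine[OF W b U c z] i W U z c b by simp
    also have "((W * U) *\<^sub>v z) $ i = (\<Sum>j<d. (W * U) $$ (i,j) * z $ j)"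
      by (rule mat_vec_sum[OF WU z i])
    finally have L: "relu_layer (W, b) (U *\<^sub>v z + c) $ i
        = (if s $ i = 1 then (\<Sum>j<d. (W * U) $$ (i,j) * z $ j) + (W *\<^sub>v c + b) $ i else 0)" .
    have "(U' *\<^sub>v z) $ i = (\<Sum>j<d. U' $$ (i,j) * z $ j)"
      using mat_vec_sum[OF _ z i, of U'] U' True by simp
    also have "\<dots> = (if s $ i = 1 then (\<Sum>j<d. (W * U) $$ (i,j) * z $ j) else 0)"
      unfolding U'_def using i by (auto intro: sum.cong)
    finally have R: "(U' *\<^sub>v z + c') $ i
        = (if s $ i = 1 then (\<Sum>j<d. (W * U) $$ (i,j) * z $ j) + (W *\<^sub>v c + b) $ i else 0)"
      using i U' c' unfolding c'_def by simp
    show "relu_layer (W, b) (U *\<^sub>v z + c) $ i = (U' *\<^sub>v z + c') $ i" using L R by simp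
  qed
  then show ?thesis using U' c' True by (intro exI[of _ U'] exI[of _ c']) auto
next
  case False
  define idx where "idx = filter (\<lambda>i. s $ i = 1) [0..<n']"
  define k where "k = weight s"
  have lk: "length idx = k" unfolding idx_def k_def by (rule length_idx[OF s])
  have dist: "distinct idx" unfolding idx_def by simp
  have mem: "i \<in> set idx \<longleftrightarrow> s $ i = 1" if "i < n'" for i
    using that unfolding idx_def by simp
  define U' :: "real mat" where "U' = mat n' k (\<lambda>(i,j). if idx ! j = i then 1 else 0)"
  have U': "U' \<in> carrier_mat n' (min d (weight s))" using False unfolding U'_def k_def by simp
  have c': "0\<^sub>v n' \<in> carrier_vec n'" by simp
  have "\<exists>z'\<in>carrier_vec (min d (weight s)). relu_layer (W, b) (U *\<^sub>v z + c) = U' *\<^sub>v z' + 0\<^sub>v n'"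
    if z: "z \<in> carrier_vec d" and sz: "sig (W, b) (U *\<^sub>v z + c) = s" for z
  proof -
    let ?a = "W *\<^sub>v (U *\<^sub>v z + c) + b"
    define z' where "z' = vec k (\<lambda>j. ?a $ (idx ! j))"
    have z': "z' \<in> carrier_vec (min d (weight s))" using False unfolding z'_def k_def by simp
    have "relu_layer (W, b) (U *\<^sub>v z + c) = U' *\<^sub>v z' + 0\<^sub>v n'"
    proof (rule eq_vecI)
      show "dim_vec (relu_layer (W, b) (U *\<^sub>v z + c)) = dim_vec (U' *\<^sub>v z' + 0\<^sub>v n')"
        using W b U'_def unfolding relu_layer_def by simp
      fix i assume "i < dim_vec (U' *\<^sub>v z' + 0\<^sub>v n')"
      then have i: "i < n'" unfolding U'_def by simp
      have "relu_layer (W, b) (U *\<^sub>v z + c) $ i = (if s $ i = 1 then ?a $ i else 0)"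
        using relu_sig[of "(W, b)" n' i] W b i sz by simp
      moreover have "(U' *\<^sub>v z') $ i = (\<Sum>j<k. U' $$ (i,j) * z' $ j)"
        by (rule mat_vec_sum[OF _ _ i]) (simp_all add: U'_def z'_def)
      moreover have "(\<Sum>j<k. U' $$ (i,j) * z' $ j) = (\<Sum>j<length idx. if idx ! j = i then ?a $ i else 0)"
        unfolding lk by (rule sum.cong[OF refl]) (use i in \<open>auto simp: U'_def z'_def\<close>)
      moreover have "\<dots> = (if i \<in> set idx then ?a $ i else 0)" by (rule sum_idx[OF dist])
      ultimately show "relu_layer (W, b) (U *\<^sub>v z + c) $ i = (U' *\<^sub>v z' + 0\<^sub>v n') $ i"
        using mem[OF i] i unfolding U'_def by simp
    qed
    then show ?thesis using z' by blast
  qed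
  then show ?thesis using U' c' by blast
qed



theorem mainTheorem2:
  fixes L :: nat and ns :: "nat \<Rightarrow> nat" and hs :: "(real mat \<times> real vec) list"
    and \<gamma> :: "nat \<Rightarrow> nat \<Rightarrow> nat \<Rightarrow> nat"
  assumes "1 \<le> L"
    and "\<forall>l\<le>L. 1 \<le> ns l"
    and "length hs = L"
    and "\<forall>l<L. hs ! l \<in> RL (ns l) (ns (Suc l))"
    and "in_Gamma \<gamma>"
  shows "real (card (multi_sigs hs (ns 0)))
           \<le> norm1 (chain_mat \<gamma> ns L *\<^sub>v unit_vec (ns 0 + 1) (ns 0))"
proof -
  note ns1 = assms(2) and len = assms(3) and hsRL = assms(4) and G = assms(5)
  define e :: "real vec" where "e = unit_vec (ns 0 + 1) (ns 0)"
  define P where "P l = multi_sig (take l hs) ` carrier_vec (ns 0)" for l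
  define v where "v l = chain_mat \<gamma> ns l *\<^sub>v e" for l
  define D where "D = dd (ns 0)"
  have e: "e \<in> carrier_vec (ns 0 + 1)" unfolding e_def by simp
  have vc: "v l \<in> carrier_vec (ns l + 1)" for l
    unfolding v_def using chain_carrier e by (rule mult_mat_vec_carrier)
  define Inv where "Inv l \<longleftrightarrow> finite (P l) \<and>
      (\<forall>p\<in>P l. D p \<le> ns l \<and> (\<exists>U c. U \<in> carrier_mat (ns l) (D p) \<and> c \<in> carrier_vec (ns l) \<and>
          (\<forall>x\<in>carrier_vec (ns 0). multi_sig (take l hs) x = p \<longrightarrow>
             (\<exists>z\<in>carrier_vec (D p). Fwd (take l hs) x = U *\<^sub>v z + c)))) \<and>
      (\<forall>K. real (card {p\<in>P l. K \<le> D p}) \<le> (\<Sum>j\<in>{K..<ns l + 1}. v l $ j))" for l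
  have "Inv l" if "l \<le> L" for l
    using that
  proof (induction l)
    case 0
    have P0: "P 0 = {[]}"
    proof -
      have "P 0 = (\<lambda>x. []) ` (carrier_vec (ns 0) :: real vec set)" unfolding P_def by simp
      moreover have "carrier_vec (ns 0) \<noteq> ({} :: real vec set)" using zero_carrier_vec by blast
      ultimately show ?thesis by (simp add: image_constant_conv)
    qed
    have D0: "D [] = ns 0" unfolding D_def by (simp add: dd_nil)
    have par: "\<exists>U c. U \<in> carrier_mat (ns 0) (D []) \<and> c \<in> carrier_vec (ns 0) \<and>
          (\<forall>x\<in>carrier_vec (ns 0). multi_sig (take 0 hs) x = [] \<longrightarrow>
             (\<exists>z\<in>carrier_vec (D []). Fwd (take 0 hs) x = U *\<^sub>v z + c))"
    proof (intro exI conjI)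
      show "1\<^sub>m (ns 0) \<in> carrier_mat (ns 0) (D [])" using D0 by simp
      show "0\<^sub>v (ns 0) \<in> carrier_vec (ns 0)" by simp
      show "\<forall>x\<in>carrier_vec (ns 0). multi_sig (take 0 hs) x = [] \<longrightarrow>
             (\<exists>z\<in>carrier_vec (D []). Fwd (take 0 hs) x = 1\<^sub>m (ns 0) *\<^sub>v z + 0\<^sub>v (ns 0))"
        using D0 by (auto simp: Fwd_nil)
    qed
    have v0: "v 0 = e" unfolding v_def using e by simp
    have cnt: "real (card {p\<in>P 0. K \<le> D p}) \<le> (\<Sum>j\<in>{K..<ns 0 + 1}. v 0 $ j)" for K
    proof -
      have "(\<Sum>j\<in>{K..<ns 0 + 1}. v 0 $ j) = (\<Sum>j\<in>{K..<ns 0 + 1}. if j = ns 0 then 1 else 0)"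
        by (rule sum.cong[OF refl]) (simp add: v0 e_def)
      also have "\<dots> = (if K \<le> ns 0 then 1 else 0)" by (simp add: sum.delta')
      finally have S: "(\<Sum>j\<in>{K..<ns 0 + 1}. v 0 $ j) = (if K \<le> ns 0 then 1 else 0)" .
      have E: "{p\<in>P 0. K \<le> D p} = (if K \<le> ns 0 then {[]} else {})"
      proof -
        have "{p\<in>{[]}. K \<le> D p} = (if K \<le> D [] then {[]} else {})"
          by (cases "K \<le> D []") auto
        then show ?thesis unfolding P0 D0 .
      qed
      show ?thesis unfolding E S by simp
    qed
    have fin0: "finite (P 0)" unfolding P0 by simp
    have par0: "\<forall>p\<in>P 0. D p \<le> ns 0 \<and> (\<exists>U c. U \<in> carrier_mat (ns 0) (D p) \<and> c \<in> carrier_vec (ns 0) \<and>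
          (\<forall>x\<in>carrier_vec (ns 0). multi_sig (take 0 hs) x = p \<longrightarrow>
             (\<exists>z\<in>carrier_vec (D p). Fwd (take 0 hs) x = U *\<^sub>v z + c)))"
      unfolding P0 using D0 par by simp
    show ?case unfolding Inv_def using fin0 par0 cnt by blast
  next
    case (Suc l)
    have lL: "l < L" using Suc.prems by simp
    have IH: "Inv l" using Suc.IH lL by simp
    define n where "n = ns l"
    define n' where "n' = ns (Suc l)"
    define W where "W = fst (hs ! l)"
    define b where "b = snd (hs ! l)"
    define Hl where "Hl = take l hs"
    have hWb: "hs ! l = (W, b)" unfolding W_def b_def by simp
    have W: "W \<in> carrier_mat n' n" and b: "b \<in> carrier_vec n'"
      using hsRL lL unfolding RL_def W_def b_def n_def n'_def by auto
    have n'1: "1 \<le> n'" using ns1 Suc.prems unfolding n'_def by simp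
    have tk: "take (Suc l) hs = Hl @ [(W, b)]"
      unfolding Hl_def using lL len hWb by (simp add: take_Suc_conv_app_nth)
    have finP: "finite (P l)" using IH unfolding Inv_def by simp
    have parP: "\<forall>p\<in>P l. D p \<le> n \<and> (\<exists>U c. U \<in> carrier_mat n (D p) \<and> c \<in> carrier_vec n \<and>
          (\<forall>x\<in>carrier_vec (ns 0). multi_sig Hl x = p \<longrightarrow>
             (\<exists>z\<in>carrier_vec (D p). Fwd Hl x = U *\<^sub>v z + c)))"
      using IH unfolding Inv_def n_def Hl_def by simp
    have cntP: "\<forall>K. real (card {p\<in>P l. K \<le> D p}) \<le> (\<Sum>j\<in>{K..<n + 1}. v l $ j)"
      using IH unfolding Inv_def n_def by simp
    have PSuc: "P (Suc l) = (\<lambda>x. multi_sig Hl x @ [sig (W, b) (Fwd Hl x)]) ` carrier_vec (ns 0)"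
      unfolding P_def tk multi_sig_snoc by simp
    have PlHl: "P l = multi_sig Hl ` carrier_vec (ns 0)" unfolding P_def Hl_def by simp
    define Reg where "Reg p = {x\<in>carrier_vec (ns 0). multi_sig Hl x = p}" for p
    define T where "T p = sig (W, b) ` (Fwd Hl ` Reg p)" for p
    have TBin: "T p \<subseteq> Bin n'" for p
      unfolding T_def using sig_Bin[of "(W, b)"] W by auto
    have finT: "finite (T p)" for p by (rule finite_subset[OF TBin finite_Bin])
    have finPS: "finite (P (Suc l))"
    proof (rule finite_subset)
      show "P (Suc l) \<subseteq> (\<lambda>(p, s). p @ [s]) ` (P l \<times> Bin n')"
      proof
        fix q assume "q \<in> P (Suc l)"
        then obtain x where x: "x \<in> carrier_vec (ns 0)" "q = multi_sig Hl x @ [sig (W, b) (Fwd Hl x)]"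
          unfolding PSuc by blast
        have "multi_sig Hl x \<in> P l" using x(1) PlHl by simp
        moreover have "sig (W, b) (Fwd Hl x) \<in> Bin n'" using sig_Bin[of "(W, b)"] W by simp
        ultimately show "q \<in> (\<lambda>(p, s). p @ [s]) ` (P l \<times> Bin n')" using x(2) by force
      qed
      show "finite ((\<lambda>(p, s). p @ [s]) ` (P l \<times> Bin n'))" using finP finite_Bin by simp
    qed
    have parPS: "D q \<le> n' \<and> (\<exists>U c. U \<in> carrier_mat n' (D q) \<and> c \<in> carrier_vec n' \<and>
          (\<forall>x\<in>carrier_vec (ns 0). multi_sig (take (Suc l) hs) x = q \<longrightarrow>
             (\<exists>z\<in>carrier_vec (D q). Fwd (take (Suc l) hs) x = U *\<^sub>v z + c)))"
      if q: "q \<in> P (Suc l)" for q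
    proof -
      obtain x0 where x0: "x0 \<in> carrier_vec (ns 0)" "q = multi_sig Hl x0 @ [sig (W, b) (Fwd Hl x0)]"
        using q unfolding PSuc by blast
      define p0 where "p0 = multi_sig Hl x0"
      define s0 where "s0 = sig (W, b) (Fwd Hl x0)"
      have q0: "q = p0 @ [s0]" using x0 p0_def s0_def by simp
      have p0P: "p0 \<in> P l" using x0(1) PlHl p0_def by simp
      have s0B: "s0 \<in> Bin n'" using sig_Bin[of "(W, b)"] W s0_def by simp
      have Dq: "D q = min (D p0) (weight s0)" unfolding q0 D_def by (simp add: dd_snoc)
      obtain U c where U: "U \<in> carrier_mat n (D p0)" and c: "c \<in> carrier_vec n"
        and reg: "\<forall>x\<in>carrier_vec (ns 0). multi_sig Hl x = p0 \<longrightarrow>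
             (\<exists>z\<in>carrier_vec (D p0). Fwd Hl x = U *\<^sub>v z + c)"
        using parP p0P by blast
      obtain U' c' where U': "U' \<in> carrier_mat n' (min (D p0) (weight s0))" and c': "c' \<in> carrier_vec n'"
        and rp: "\<forall>z\<in>carrier_vec (D p0). sig (W, b) (U *\<^sub>v z + c) = s0 \<longrightarrow>
       (\<exists>z'\<in>carrier_vec (min (D p0) (weight s0)). relu_layer (W, b) (U *\<^sub>v z + c) = U' *\<^sub>v z' + c')"
        using relu_param[OF W b U c s0B] by blast
      have "\<exists>z\<in>carrier_vec (D q). Fwd (take (Suc l) hs) x = U' *\<^sub>v z + c'"
        if x: "x \<in> carrier_vec (ns 0)" "multi_sig (take (Suc l) hs) x = q" for x
      proof -
        have "multi_sig Hl x @ [sig (W, b) (Fwd Hl x)] = p0 @ [s0]"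
          using x(2) unfolding tk multi_sig_snoc q0 .
        then have m1: "multi_sig Hl x = p0" and m2: "sig (W, b) (Fwd Hl x) = s0" by simp_all
        obtain z where z: "z \<in> carrier_vec (D p0)" "Fwd Hl x = U *\<^sub>v z + c" using reg x(1) m1 by blast
        obtain z' where z': "z' \<in> carrier_vec (min (D p0) (weight s0))"
          "relu_layer (W, b) (U *\<^sub>v z + c) = U' *\<^sub>v z' + c'"
          using rp z m2 by auto
        have "Fwd (take (Suc l) hs) x = U' *\<^sub>v z' + c'"
          unfolding tk Fwd_snoc z(2) z'(2) ..
        then show ?thesis using z'(1) Dq by auto
      qed
      moreover have "D q \<le> n'" using Dq weight_le[OF s0B] by simp
      ultimately show ?thesis using U' c' Dq by auto
    qed
    have cntPS: "real (card {q\<in>P (Suc l). J \<le> D q}) \<le> (\<Sum>j\<in>{J..<n' + 1}. v (Suc l) $ j)" for J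
    proof -
      define A where "A p = {s\<in>T p. J \<le> min (D p) (weight s)}" for p
      have sub: "{q\<in>P (Suc l). J \<le> D q} \<subseteq> (\<Union>p\<in>P l. (\<lambda>s. p @ [s]) ` A p)"
      proof
        fix q assume q: "q \<in> {q\<in>P (Suc l). J \<le> D q}"
        then obtain x where x: "x \<in> carrier_vec (ns 0)" "q = multi_sig Hl x @ [sig (W, b) (Fwd Hl x)]"
          unfolding PSuc by blast
        define p where "p = multi_sig Hl x"
        have pP: "p \<in> P l" using x(1) PlHl p_def by simp
        have "sig (W, b) (Fwd Hl x) \<in> T p" unfolding T_def Reg_def p_def using x(1) by blast
        moreover have "J \<le> min (D p) (weight (sig (W, b) (Fwd Hl x)))"
          using q x(2) p_def unfolding D_def by (simp add: dd_snoc)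
        ultimately have "sig (W, b) (Fwd Hl x) \<in> A p" unfolding A_def by simp
        then show "q \<in> (\<Union>p\<in>P l. (\<lambda>s. p @ [s]) ` A p)" using pP x(2) p_def by blast
      qed
      have finA: "finite (A p)" for p unfolding A_def using finT by simp
      have "card {q\<in>P (Suc l). J \<le> D q} \<le> card (\<Union>p\<in>P l. (\<lambda>s. p @ [s]) ` A p)"
        by (rule card_mono[OF _ sub]) (use finP finA in simp)
      also have "\<dots> \<le> (\<Sum>p\<in>P l. card ((\<lambda>s. p @ [s]) ` A p))"
        by (rule card_UN_le[OF finP])
      also have "\<dots> \<le> (\<Sum>p\<in>P l. card (A p))"
        by (rule sum_mono) (rule card_image_le[OF finA])
      finally have c1: "real (card {q\<in>P (Suc l). J \<le> D q}) \<le> (\<Sum>p\<in>P l. real (card (A p)))"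
        by (metis of_nat_le_iff of_nat_sum)
      have perp: "real (card (A p)) \<le> gcol \<gamma> n' J (min (D p) n')" if pP: "p \<in> P l" for p
      proof -
        define m where "m = min (D p) n'"
        obtain U c where U: "U \<in> carrier_mat n (D p)" and c: "c \<in> carrier_vec n"
          and reg: "\<forall>x\<in>carrier_vec (ns 0). multi_sig Hl x = p \<longrightarrow>
             (\<exists>z\<in>carrier_vec (D p). Fwd Hl x = U *\<^sub>v z + c)"
          using parP pP by blast
        have R: "\<forall>y\<in>Fwd Hl ` Reg p. \<exists>z\<in>carrier_vec (D p). y = U *\<^sub>v z + c"
          using reg unfolding Reg_def by blast
        obtain h2 where h2: "h2 \<in> RL m n'" and Tsub: "T p \<subseteq> sigs h2 m"
          using layer_sigs[OF W b U c R] unfolding T_def m_def by blast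
        show ?thesis
        proof (cases "J \<le> m")
          case True
          have mn: "m \<le> n'" unfolding m_def by simp
          have V: "in_V (\<gamma> m n')" using G n'1 mn unfolding in_Gamma_def by blast
          have "card (A p) \<le> card {s\<in>T p. J \<le> weight s}"
            by (rule card_mono) (use finT in \<open>auto simp: A_def\<close>)
          also have "\<dots> \<le> tail (\<gamma> m n') J"
            by (rule gamma_count[OF G n'1 mn h2 True Tsub])
          finally have "real (card (A p)) \<le> real (tail (\<gamma> m n') J)" by simp
          also have "\<dots> = gcol \<gamma> n' J m" using gcol_eq[where \<gamma>=\<gamma> and k=m and n'=n' and J=J, OF V mn] True by simp
          finally show ?thesis unfolding m_def .
        next
          case False
          have "A p = {}"
          proof -
            have "\<not> J \<le> min (D p) (weight s)" if sT: "s \<in> T p" for s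
            proof -
              have "s \<in> Bin n'" using TBin sT by blast
              then have "weight s \<le> n'" by (rule weight_le)
              then show ?thesis using False unfolding m_def by auto
            qed
            then show ?thesis unfolding A_def by blast
          qed
          then show ?thesis using gcol_nonneg by simp
        qed
      qed
      have "(\<Sum>p\<in>P l. real (card (A p))) \<le> (\<Sum>p\<in>P l. gcol \<gamma> n' J (min (D p) n'))"
        by (rule sum_mono) (rule perp)
      also have "\<dots> \<le> (\<Sum>j<n+1. v l $ j * gcol \<gamma> n' J (min j n'))"
      proof (rule abel[where N = n'])
        show "finite (P l)" by (rule finP)
        show "\<forall>x\<in>P l. min (D x) n' \<le> n'" by simp
        show "\<forall>j<n+1. min j n' \<le> n'" by simp
        show "\<forall>k<n'. gcol \<gamma> n' J k \<le> gcol \<gamma> n' J (Suc k)" using gcol_mono[OF G n'1] by blast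
        show "0 \<le> gcol \<gamma> n' J 0" by (rule gcol_nonneg)
        show "\<forall>K\<le>n'. real (card {x\<in>P l. K \<le> min (D x) n'}) \<le> (\<Sum>j\<in>{j\<in>{..<n+1}. K \<le> min j n'}. v l $ j)"
        proof (intro allI impI)
          fix K assume K: "K \<le> n'"
          have "{x\<in>P l. K \<le> min (D x) n'} = {p\<in>P l. K \<le> D p}" using K by auto
          moreover have "{j\<in>{..<n+1}. K \<le> min j n'} = {K..<n+1}" using K by auto
          ultimately show "real (card {x\<in>P l. K \<le> min (D x) n'}) \<le> (\<Sum>j\<in>{j\<in>{..<n+1}. K \<le> min j n'}. v l $ j)"
            using cntP by simp
        qed
      qed
      also have "\<dots> = (\<Sum>i\<in>{J..<n'+1}. (bound_mat \<gamma> n' *\<^sub>v (conn_mat n n' *\<^sub>v v l)) $ i)"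
        by (rule rtail_step[symmetric]) (use vc in \<open>simp add: n_def\<close>)
      also have "\<dots> = (\<Sum>i\<in>{J..<n'+1}. v (Suc l) $ i)"
        unfolding v_def chain_step[where ns=ns and \<gamma>=\<gamma> and l=l, OF e] n_def n'_def ..
      finally show ?thesis using c1 by simp
    qed
    show ?case unfolding Inv_def using finPS parPS cntPS unfolding n'_def by blast
  qed
  then have IL: "Inv L" by simp
  have PL: "multi_sigs hs (ns 0) = P L" unfolding P_def multi_sigs_def using len by simp
  have "real (card (P L)) = real (card {p\<in>P L. 0 \<le> D p})" by simp
  also have "\<dots> \<le> (\<Sum>j\<in>{0..<ns L + 1}. v L $ j)" using IL unfolding Inv_def by blast
  also have "\<dots> \<le> (\<Sum>j\<in>{0..<ns L + 1}. \<bar>v L $ j\<bar>)" by (rule sum_mono) simp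
  also have "\<dots> = norm1 (v L)" unfolding norm1_def using vc[of L] by (simp add: atLeast0LessThan)
  finally show ?thesis unfolding PL v_def e_def .
qed

end
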